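(* Let $L\ge2$, $k\ge2$ be integers, $\kappa:\{1,\dots,k-1\}\times\mathbb{N}\to\{0,\dots,L-1\}$ a map, and let $(a(n))_{n=0}^\infty$ be an $(L,k,\kappa)$-TM sequence. Then $(a(n))_{n=0}^\infty$ is ultimately periodic if and only if there exists an integer $A\ge0$ such that $$\kappa(s,A+y)\equiv\kappa(1,A)\,s\,k^y\pmod L$$ for all $1\le s\le k-1$ and all $y\in\mathbb{N}$. Moreover, if $(a(n))_{n=0}^\infty$ is not ultimately periodic, then none of its equally spaced subsequences $(a(N+tl))_{t=0}^\infty$ ($N\ge0$, $l>0$) is ultimately periodic.
   Context: $\mathbb{N}$ is the set of non-negative integers. Let $a_0,\dots,a_{L-1}$ be pairwise distinct complex numbers and $f$ the map on $\{a_0,\dots,a_{L-1}\}$ with $f(a_i)=a_{i+1}$ (indices mod $L$), extended letterwise to finite words; $f^j$ is its $j$-fold iterate, $f^0$ the identity. Define $A_0=a_0$ and $A_{n+1}=A_n\,f^{\kappa(1,n)}(A_n)\cdots f^{\kappa(k-1,n)}(A_n)$ (concatenation); $A_n$ is a prefix of $A_{n+1}$ and the infinite word $\lim A_n$, indexed from $0$, is the $(L,k,\kappa)$-TM sequence. A sequence $(b(n))$ is ultimately periodic if there are $N\ge0$, $l>0$ with $b(n)=b(n+l)$ for all $n\ge N$. *)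

theory Defs
  imports Complex_Main
begin

text \<open>The map f on the alphabet {a_0,...,a_{L-1}}: f(a_i) = a_{(i+1) mod L}.
  Outside the alphabet it is (irrelevantly) the identity.\<close>
definition TM_f :: "(nat \<Rightarrow> complex) \<Rightarrow> nat \<Rightarrow> complex \<Rightarrow> complex" where
  "TM_f a L x = (if \<exists>i<L. x = a i then a (Suc (THE i. i < L \<and> x = a i) mod L) else x)"

fun TM_word :: "(nat \<Rightarrow> complex) \<Rightarrow> nat \<Rightarrow> nat \<Rightarrow> (nat \<Rightarrow> nat \<Rightarrow> nat) \<Rightarrow> nat \<Rightarrow> complex list" where
  "TM_word a L k \<kappa> 0 = [a 0]"
| "TM_word a L k \<kappa> (Suc n) =
     TM_word a L k \<kappa> n @
     concat (map (\<lambda>s. map ((TM_f a L) ^^ (\<kappa> s n)) (TM_word a L k \<kappa> n)) [1..<k])"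

text \<open>The infinite word lim A_n, indexed from 0. Since A_n is a prefix of A_{n+1} and
  |A_n| = k^n > n for k \<ge> 2, its m-th letter is the m-th letter of A_m.\<close>
definition TM_seq :: "(nat \<Rightarrow> complex) \<Rightarrow> nat \<Rightarrow> nat \<Rightarrow> (nat \<Rightarrow> nat \<Rightarrow> nat) \<Rightarrow> nat \<Rightarrow> complex" where
  "TM_seq a L k \<kappa> m = TM_word a L k \<kappa> m ! m"

definition ult_periodic :: "(nat \<Rightarrow> 'b) \<Rightarrow> bool" where
  "ult_periodic b \<longleftrightarrow> (\<exists>N l. l > 0 \<and> (\<forall>n\<ge>N. b n = b (n + l)))"

end

theory Submission imports Defs begin
definition kp :: "(nat\<Rightarrow>nat\<Rightarrow>nat) \<Rightarrow> nat \<Rightarrow> nat \<Rightarrow> nat" where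
 "kp \<kappa> s j = (if s = 0 then 0 else \<kappa> s j)"
fun Ev :: "(nat\<Rightarrow>nat\<Rightarrow>nat) \<Rightarrow> nat \<Rightarrow> nat \<Rightarrow> nat \<Rightarrow> nat" where
 "Ev \<kappa> k J v = (if v = 0 \<or> k < 2 then 0 else kp \<kappa> (v mod k) J + Ev \<kappa> k (Suc J) (v div k))"
declare Ev.simps[simp del]

lemma Ev0[simp]: "Ev \<kappa> k J 0 = 0" by (simp add: Ev.simps)
lemma Ev_rec: "k \<ge> 2 \<Longrightarrow> Ev \<kappa> k J v = kp \<kappa> (v mod k) J + Ev \<kappa> k (Suc J) (v div k)"
  by (cases "v = 0") (simp_all add: Ev.simps[of _ _ _ v] kp_def)
lemma Ev_digit: "k \<ge> 2 \<Longrightarrow> q < k \<Longrightarrow> Ev \<kappa> k J q = kp \<kappa> q J"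
  using Ev_rec[of k \<kappa> J q] by simp
lemma Ev_split: "k \<ge> 2 \<Longrightarrow> r < k^n \<Longrightarrow> Ev \<kappa> k J (r + q * k^n) = Ev \<kappa> k J r + Ev \<kappa> k (J+n) q"
proof (induction n arbitrary: J r)
  case 0 then show ?case by simp
next
  case (Suc n)
  have e: "r + q * k^Suc n = r + (q*k^n)*k" by (simp add: algebra_simps)
  have m: "(r + q * k^Suc n) mod k = r mod k" unfolding e by simp
  have d: "(r + q * k^Suc n) div k = r div k + q * k^n"
    using Suc.prems by (simp add: algebra_simps)
  have lt: "r div k < k^n" using Suc.prems by (simp add: less_mult_imp_div_less mult.commute)
  show ?case
    using Ev_rec[of k \<kappa> J "r + q * k^Suc n"] Ev_rec[of k \<kappa> J r] m d Suc.IH[OF Suc.prems(1) lt, of "Suc J"] Suc.prems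
    by simp
qed

lemma nth_concat_blocks:
  "length W = n \<Longrightarrow> i < length ss \<Longrightarrow> r < n \<Longrightarrow>
   concat (map (\<lambda>s. map (g s) W) ss) ! (i*n + r) = g (ss!i) (W!r)"
proof (induction ss arbitrary: i)
  case Nil then show ?case by simp
next
  case (Cons s ss)
  show ?case
  proof (cases i)
    case 0 then show ?thesis using Cons.prems by (simp add: nth_append)
  next
    case (Suc i')
    have "i*n + r = n + (i'*n + r)" using Suc by simp
    then show ?thesis using Cons Suc by (simp add: nth_append)
  qed
qed

lemma length_concat_blocks:
  "length (concat (map (\<lambda>s. map (g s) W) ss)) = length ss * length W"
  by (induction ss) auto

lemma TM_f_a:
  assumes "inj_on a {..<L}" "i < L"
  shows "TM_f a L (a i) = a (Suc i mod L)"
proof -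
  have "(THE j. j < L \<and> a i = a j) = i"
    using assms by (intro the_equality) (auto simp: inj_on_def)
  then show ?thesis using assms unfolding TM_f_def by auto
qed

lemma TM_f_pow:
  assumes "inj_on a {..<L}" "i < L"
  shows "(TM_f a L ^^ j) (a i) = a ((i + j) mod L)"
proof (induction j)
  case 0 then show ?case using assms by simp
next
  case (Suc j)
  have "L > 0" using assms by simp
  then show ?case using Suc TM_f_a[OF assms(1), of "(i+j) mod L"]
    by (simp add: mod_Suc_eq)
qed

lemma TM_word_prop:
  assumes "inj_on a {..<L}" "L \<ge> 2" "k \<ge> 2"
  shows "length (TM_word a L k \<kappa> n) = k^n \<and>
     (\<forall>m<k^n. TM_word a L k \<kappa> n ! m = a (Ev \<kappa> k 0 m mod L))"
proof (induction n)
  case 0 then show ?case by simp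
next
  case (Suc n)
  let ?W = "TM_word a L k \<kappa> n"
  have lenW: "length ?W = k^n" using Suc by simp
  have len: "length (TM_word a L k \<kappa> (Suc n)) = k^Suc n"
    using lenW assms by (simp add: length_concat_blocks algebra_simps)
  have "TM_word a L k \<kappa> (Suc n) ! m = a (Ev \<kappa> k 0 m mod L)" if m: "m < k^Suc n" for m
  proof (cases "m < k^n")
    case True then show ?thesis using Suc lenW by (simp add: nth_append)
  next
    case False
    define q where "q = m div k^n"
    define r where "r = m mod k^n"
    have kn: "k^n > 0" using assms by simp
    have q1: "q \<ge> 1" using False q_def kn by (simp add: le_div_geq)
    have qk: "q < k" using m q_def kn by (simp add: less_mult_imp_div_less mult.commute)
    have rl: "r < k^n" using r_def kn by simp
    have mq: "m = r + q * k^n" using q_def r_def by (metis mod_div_mult_eq add.commute)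
    have idx: "m - k^n = (q - 1) * k^n + r" using mq q1 by (simp add: algebra_simps)
    have ss: "[1..<k] ! (q - 1) = q" using q1 qk by simp
    have "TM_word a L k \<kappa> (Suc n) ! m =
        concat (map (\<lambda>s. map ((TM_f a L) ^^ (\<kappa> s n)) ?W) [1..<k]) ! (m - k^n)"
      using False lenW by (simp add: nth_append)
    also have "\<dots> = ((TM_f a L) ^^ (\<kappa> q n)) (?W ! r)"
      unfolding idx using nth_concat_blocks[OF lenW, of "q-1" "[1..<k]" r "\<lambda>s. (TM_f a L) ^^ (\<kappa> s n)"] ss q1 qk rl by simp
    also have "\<dots> = a ((Ev \<kappa> k 0 r mod L + \<kappa> q n) mod L)"
      using Suc rl TM_f_pow[OF assms(1)] assms by simp
    also have "\<dots> = a (Ev \<kappa> k 0 m mod L)"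
      using mq Ev_split[OF assms(3) rl, of \<kappa> 0 q] Ev_digit[OF assms(3) qk] q1
      by (simp add: kp_def mod_add_left_eq)
    finally show ?thesis .
  qed
  then show ?case using len by simp
qed

lemma TM_seq_Ev:
  assumes "inj_on a {..<L}" "L \<ge> 2" "k \<ge> 2"
  shows "TM_seq a L k \<kappa> m = a (Ev \<kappa> k 0 m mod L)"
proof -
  have "m < 2^m" by (rule less_exp)
  also have "\<dots> \<le> k^m" using assms by (simp add: power_mono)
  finally show ?thesis using TM_word_prop[OF assms, of \<kappa> m] unfolding TM_seq_def by simp
qed

lemma TM_seq_eq_iff:
  assumes "inj_on a {..<L}" "L \<ge> 2" "k \<ge> 2"
  shows "TM_seq a L k \<kappa> m = TM_seq a L k \<kappa> m' \<longleftrightarrow> Ev \<kappa> k 0 m mod L = Ev \<kappa> k 0 m' mod L"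
  using TM_seq_Ev[OF assms] assms(1,2) unfolding inj_on_def
  by (metis lessThan_iff mod_less_divisor neq0_conv not_numeral_le_zero)

lemma nat_mod_to_dvd: "x mod L = y mod L \<Longrightarrow> int L dvd (int x - int y)"
  by (metis mod_eq_dvd_iff of_nat_mod)
lemma dvd_to_nat_mod: "int L dvd (int x - int y) \<Longrightarrow> x mod L = y mod L"
  by (metis mod_eq_dvd_iff of_nat_mod of_nat_eq_iff)

lemma gen_alg: "(c::nat) * k^y * r + c * k^Suc y * d = c * k^y * (r + k * d)"
  by (simp add: algebra_simps)

lemma Ev_lin:
  assumes k: "k \<ge> 2"
    and c: "\<forall>s\<in>{1..k-1}. \<forall>y. \<kappa> s (A + y) mod L = (\<kappa> 1 A * s * k ^ y) mod L"
  shows "Ev \<kappa> k (A+y) q mod L = (\<kappa> 1 A * k^y * q) mod L"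
proof (induction q arbitrary: y rule: less_induct)
  case (less q)
  show ?case
  proof (cases "q = 0")
    case True then show ?thesis by simp
  next
    case False
    have lt: "q div k < q" using False k by simp
    have IH: "Ev \<kappa> k (A + Suc y) (q div k) mod L = (\<kappa> 1 A * k^Suc y * (q div k)) mod L"
      using less.IH[OF lt] .
    have kp: "kp \<kappa> (q mod k) (A+y) mod L = (\<kappa> 1 A * k^y * (q mod k)) mod L"
    proof (cases "q mod k = 0")
      case True then show ?thesis by (simp add: kp_def)
    next
      case False
      have "q mod k < k" using k by simp
      then have "q mod k \<in> {1..k-1}" using False by simp
      then have "\<kappa> (q mod k) (A + y) mod L = (\<kappa> 1 A * (q mod k) * k ^ y) mod L" using c by blast
      then show ?thesis using False by (simp add: kp_def algebra_simps)
    qed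
    have "Ev \<kappa> k (A+y) q = kp \<kappa> (q mod k) (A+y) + Ev \<kappa> k (A + Suc y) (q div k)"
      using Ev_rec[OF k, of \<kappa> "A+y" q] by simp
    then have "Ev \<kappa> k (A+y) q mod L
       = (kp \<kappa> (q mod k) (A+y) mod L + Ev \<kappa> k (A + Suc y) (q div k) mod L) mod L"
      by (simp add: mod_add_eq)
    also have "\<dots> = ((\<kappa> 1 A * k^y * (q mod k)) mod L + (\<kappa> 1 A * k^Suc y * (q div k)) mod L) mod L"
      using kp IH by simp
    also have "\<dots> = (\<kappa> 1 A * k^y * (q mod k) + \<kappa> 1 A * k^Suc y * (q div k)) mod L"
      by (simp add: mod_add_eq)
    also have "\<kappa> 1 A * k^y * (q mod k) + \<kappa> 1 A * k^Suc y * (q div k) = \<kappa> 1 A * k^y * (q mod k + k * (q div k))"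
      using gen_alg[of "\<kappa> 1 A" k y "q mod k" "q div k"] .
    also have "q mod k + k * (q div k) = q" by simp
    finally show ?thesis .
  qed
qed

lemma periodic_of_cond:
  assumes k: "k \<ge> 2" and L: "L \<ge> 2"
    and c: "\<forall>s\<in>{1..k-1}. \<forall>y. \<kappa> s (A + y) mod L = (\<kappa> 1 A * s * k ^ y) mod L"
  shows "Ev \<kappa> k 0 (n + L * k^A) mod L = Ev \<kappa> k 0 n mod L"
proof -
  define r where "r = n mod k^A"
  define q where "q = n div k^A"
  have rl: "r < k^A" using k r_def by simp
  have n: "n = r + q * k^A" using r_def q_def by (metis mod_div_mult_eq add.commute)
  have n2: "n + L * k^A = r + (q + L) * k^A" using n by (simp add: algebra_simps)
  have "Ev \<kappa> k A (q + L) mod L = Ev \<kappa> k A q mod L"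
    using Ev_lin[OF k c, of 0 "q+L"] Ev_lin[OF k c, of 0 q] by (simp add: algebra_simps)
  moreover have "Ev \<kappa> k 0 n = Ev \<kappa> k 0 r + Ev \<kappa> k A q"
    using n Ev_split[OF k rl, of \<kappa> 0 q] by simp
  moreover have "Ev \<kappa> k 0 (n + L * k^A) = Ev \<kappa> k 0 r + Ev \<kappa> k A (q + L)"
    unfolding n2 using Ev_split[OF k rl, of \<kappa> 0 "q+L"] by simp
  ultimately show ?thesis by (metis mod_add_right_eq)
qed

lemma dvd_comb: "(d::int) dvd X \<Longrightarrow> d dvd Y \<Longrightarrow> Z = X + c * Y \<Longrightarrow> d dvd Z"
  by simp

lemma key:
  assumes k: "k \<ge> 2" and L: "L \<ge> 2" and l: "l > 0" and p: "p > 0"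
    and per: "\<forall>t\<ge>T. Ev \<kappa> k 0 (N + t*l) mod L = Ev \<kappa> k 0 (N + (t+p)*l) mod L"
  shows "\<exists>A. \<forall>s\<in>{1..k-1}. \<forall>y. \<kappa> s (A+y) mod L = (\<kappa> 1 A * s * k^y) mod L"
proof -
  define P where "P = p*l"
  define B where "B = N + T*l + P"
  have lP: "l \<le> P" using p by (simp add: P_def)
  have c0: "Ev \<kappa> k 0 (m+P) mod L = Ev \<kappa> k 0 m mod L" if m1: "N + T*l \<le> m" and m2: "m mod l = N mod l" for m
  proof -
    have Nm: "N \<le> m" using m1 by simp
    have "l dvd (m - N)" using m2 Nm by (simp add: mod_eq_dvd_iff_nat)
    then obtain t where t: "m - N = l*t" by (auto simp: dvd_def)
    have "m = N + (m - N)" using Nm by simp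
    then have m: "m = N + t*l" using t by (simp add: mult.commute)
    have "T*l \<le> t*l" using m1 m by simp
    then have Tt: "T \<le> t" using l by simp
    have mP: "m + P = N + (t+p)*l" by (simp add: m P_def algebra_simps)
    have h: "Ev \<kappa> k 0 (N + t*l) mod L = Ev \<kappa> k 0 (N + (t+p)*l) mod L" using per Tt by blast
    show ?thesis unfolding mP using h m by simp
  qed
  have c1: "int L dvd ((int (Ev \<kappa> k J (v+1)) - int (Ev \<kappa> k J v)) - (int (Ev \<kappa> k 0 u) - int (Ev \<kappa> k 0 (u+P-k^J))))"
    if J: "B \<le> k^J" and u1: "k^J - P \<le> u" and u2: "u < k^J" and um: "(u + v*k^J) mod l = N mod l" for J v u
  proof -
    have PJ: "P \<le> k^J" using J B_def by simp
    have e1: "Ev \<kappa> k 0 (u + v*k^J) = Ev \<kappa> k 0 u + Ev \<kappa> k J v" using Ev_split[OF k u2] by simp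
    have r2: "u + P - k^J < k^J" using u2 PJ by simp
    have ge: "k^J \<le> u + P" using u1 PJ by simp
    have eq: "u + v*k^J + P = (u+P-k^J) + (v+1)*k^J" using ge by (simp add: algebra_simps)
    have e2: "Ev \<kappa> k 0 (u + v*k^J + P) = Ev \<kappa> k 0 (u+P-k^J) + Ev \<kappa> k J (v+1)"
      unfolding eq using Ev_split[OF k r2, of \<kappa> 0 "v+1"] by simp
    have "N + T*l \<le> u + v*k^J" using u1 J B_def PJ by linarith
    then have "Ev \<kappa> k 0 (u + v*k^J + P) mod L = Ev \<kappa> k 0 (u + v*k^J) mod L" using c0 um by simp
    then have "int L dvd (int (Ev \<kappa> k 0 (u + v*k^J + P)) - int (Ev \<kappa> k 0 (u + v*k^J)))"
      by (rule nat_mod_to_dvd)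
    then show ?thesis unfolding e1 e2 by (rule dvd_comb[where Y=0]) auto
  qed
  have c1': "int L dvd ((int (Ev \<kappa> k J (v+1)) - int (Ev \<kappa> k J v)) - (int (Ev \<kappa> k J (v'+1)) - int (Ev \<kappa> k J v')))"
    if J: "B \<le> k^J" and vv: "v mod l = v' mod l" for J v v'
  proof -
    have PJ: "P \<le> k^J" using J B_def by simp
    define w where "w = k^J - P + v*k^J"
    define u where "u = k^J - P + (N + w*(l-1)) mod l"
    have "(N + w*(l-1)) mod l < l" using l by simp
    then have u2: "u < k^J" using lP PJ u_def by linarith
    have u1: "k^J - P \<le> u" by (simp add: u_def)
    have "u + v*k^J = w + (N + w*(l-1)) mod l" by (simp add: u_def w_def)
    then have "(u + v*k^J) mod l = (w + (N + w*(l-1))) mod l" by (metis mod_add_right_eq)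
    also have "w + (N + w*(l-1)) = N + w*l" using l
      by (metis add.assoc add.commute mult.commute mult_eq_if not_gr_zero)
    also have "(N + w*l) mod l = N mod l" by simp
    finally have um: "(u + v*k^J) mod l = N mod l" .
    have "(v'*k^J) mod l = (v*k^J) mod l" using vv by (metis mod_mult_left_eq)
    then have "(u + v'*k^J) mod l = (u + v*k^J) mod l" by (metis mod_add_right_eq)
    then have um': "(u + v'*k^J) mod l = N mod l" using um by simp
    show ?thesis
      by (rule dvd_comb[OF c1[OF J u1 u2 um] c1[OF J u1 u2 um'], where c="-1"]) (simp add: algebra_simps)
  qed
  have c2: "int L dvd (int (Ev \<kappa> k J (v + l)) - int (Ev \<kappa> k J v) - int (Ev \<kappa> k J l))" if J: "B \<le> k^J" for J v
  proof (induction v)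
    case 0 then show ?case by simp
  next
    case (Suc v)
    have "(v + l) mod l = v mod l" by simp
    from c1'[OF J this] have cc: "int L dvd ((int (Ev \<kappa> k J (v+l+1)) - int (Ev \<kappa> k J (v+l))) - (int (Ev \<kappa> k J (v+1)) - int (Ev \<kappa> k J v)))" .
    show ?case by (rule dvd_comb[OF Suc.IH cc, where c=1]) (simp add: algebra_simps)
  qed
  have c3: "int L dvd (int (Ev \<kappa> k (J+l) (x+1)) - int (Ev \<kappa> k (J+l) x) - int (\<kappa> 1 (J+l)))" if J: "B \<le> k^J" for J x
  proof -
    have "l < 2^l" by (rule less_exp)
    also have "(2::nat)^l \<le> k^l" using k by (simp add: power_mono)
    finally have kl: "l < k^l" .
    define w where "w = k^l - l"
    have wl: "w < k^l" using l kl w_def by simp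
    have e1: "Ev \<kappa> k J (w + x*k^l) = Ev \<kappa> k J w + Ev \<kappa> k (J+l) x" for x using Ev_split[OF k wl] by simp
    have e2: "Ev \<kappa> k J (w + x*k^l + l) = Ev \<kappa> k (J+l) (x+1)" for x
    proof -
      have eq: "w + x*k^l + l = 0 + (x+1)*k^l" using kl w_def by (simp add: algebra_simps)
      have "(0::nat) < k^l" using k by simp
      from Ev_split[OF k this, of \<kappa> J "x+1"] show ?thesis unfolding eq by simp
    qed
    have d1: "int L dvd (int (Ev \<kappa> k (J+l) (x+1)) - (int (Ev \<kappa> k J w) + int (Ev \<kappa> k (J+l) x)) - int (Ev \<kappa> k J l))"
      using c2[OF J, of "w + x*k^l"] unfolding e1 e2 by simp
    have d0: "int L dvd (int (Ev \<kappa> k (J+l) 1) - int (Ev \<kappa> k J w) - int (Ev \<kappa> k J l))"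
      using c2[OF J, of "w"] e2[of 0] by simp
    have "Ev \<kappa> k (J+l) 1 = \<kappa> 1 (J+l)" using Ev_digit[OF k, of 1] k by (simp add: kp_def)
    then show ?thesis by (intro dvd_comb[OF d1 d0, where c="-1"]) (simp add: algebra_simps)
  qed
  define A where "A = B + l"
  have c4: "int L dvd (int (Ev \<kappa> k J (x+1)) - int (Ev \<kappa> k J x) - int (\<kappa> 1 J))" if AJ: "A \<le> J" for J x
  proof -
    have "B \<le> J - l" using AJ A_def by simp
    also have "J - l < 2^(J-l)" by (rule less_exp)
    also have "(2::nat)^(J-l) \<le> k^(J-l)" using k by (simp add: power_mono)
    finally have "B \<le> k^(J-l)" by simp
    from c3[OF this, of x] show ?thesis using AJ A_def by simp
  qed
  have c5: "int L dvd (int (Ev \<kappa> k J x) - int x * int (\<kappa> 1 J))" if AJ: "A \<le> J" for J x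
  proof (induction x)
    case 0 then show ?case by simp
  next
    case (Suc x)
    show ?case by (rule dvd_comb[OF c4[OF AJ, of x] Suc.IH, where c=1]) (simp add: algebra_simps)
  qed
  have c6: "int L dvd (int (\<kappa> s J) - int s * int (\<kappa> 1 J))" if AJ: "A \<le> J" and s: "s \<in> {1..k-1}" for J s
  proof -
    have "s < k" "s \<noteq> 0" using s k by auto
    then have "Ev \<kappa> k J s = \<kappa> s J" using Ev_digit[OF k] by (simp add: kp_def)
    then show ?thesis using c5[OF AJ, of s] by simp
  qed
  have c7: "int L dvd (int (\<kappa> 1 (Suc J)) - int k * int (\<kappa> 1 J))" if AJ: "A \<le> J" for J
  proof -
    have "Ev \<kappa> k J k = kp \<kappa> 0 J + Ev \<kappa> k (Suc J) 1" using Ev_rec[OF k, of \<kappa> J k] k by simp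
    also have "\<dots> = \<kappa> 1 (Suc J)" using Ev_digit[OF k, of 1] k by (simp add: kp_def)
    finally show ?thesis using c5[OF AJ, of k] by simp
  qed
  have c8: "int L dvd (int (\<kappa> 1 (A+y)) - int k^y * int (\<kappa> 1 A))" for y
  proof (induction y)
    case 0 then show ?case by simp
  next
    case (Suc y)
    have ay: "A \<le> A + y" by simp
    show ?case by (rule dvd_comb[OF c7[OF ay] Suc.IH, where c="int k"]) (simp add: algebra_simps)
  qed
  have "\<kappa> s (A+y) mod L = (\<kappa> 1 A * s * k^y) mod L" if s: "s \<in> {1..k-1}" for s y
  proof -
    have ay: "A \<le> A + y" by simp
    have "int L dvd (int (\<kappa> s (A+y)) - int (\<kappa> 1 A * s * k^y))"
      by (rule dvd_comb[OF c6[OF ay s] c8[of y], where c="int s"]) (simp add: algebra_simps)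
    then show ?thesis by (rule dvd_to_nat_mod)
  qed
  then show ?thesis by blast
qed

theorem theorem3p1:
  fixes L k :: nat and \<kappa> :: "nat \<Rightarrow> nat \<Rightarrow> nat" and a :: "nat \<Rightarrow> complex"
  assumes "L \<ge> 2" and "k \<ge> 2"
    and "\<forall>s\<in>{1..k-1}. \<forall>n. \<kappa> s n < L"
    and "inj_on a {..<L}"
  shows "(ult_periodic (TM_seq a L k \<kappa>) \<longleftrightarrow>
           (\<exists>A::nat. \<forall>s\<in>{1..k-1}. \<forall>y::nat.
              \<kappa> s (A + y) mod L = (\<kappa> 1 A * s * k ^ y) mod L))
       \<and> (\<not> ult_periodic (TM_seq a L k \<kappa>) \<longrightarrow>
           (\<forall>N l. l > 0 \<longrightarrow> \<not> ult_periodic (\<lambda>t. TM_seq a L k \<kappa> (N + t * l))))"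
proof -
  note eqi = TM_seq_eq_iff[OF assms(4) assms(1) assms(2)]
  let ?C = "\<exists>A::nat. \<forall>s\<in>{1..k-1}. \<forall>y::nat. \<kappa> s (A + y) mod L = (\<kappa> 1 A * s * k ^ y) mod L"
  have bwd: "ult_periodic (TM_seq a L k \<kappa>)" if "?C"
  proof -
    from that obtain A where c: "\<forall>s\<in>{1..k-1}. \<forall>y. \<kappa> s (A + y) mod L = (\<kappa> 1 A * s * k ^ y) mod L" by blast
    have pos: "L * k^A > 0" using assms(1,2) by simp
    have "\<forall>n\<ge>0. TM_seq a L k \<kappa> n = TM_seq a L k \<kappa> (n + L * k^A)"
      using periodic_of_cond[OF assms(2) assms(1) c] eqi by simp
    then show ?thesis unfolding ult_periodic_def using pos by blast
  qed
  have fwd: "?C" if l: "l > 0" and u: "ult_periodic (\<lambda>t. TM_seq a L k \<kappa> (N + t * l))" for N l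
  proof -
    from u obtain T p where p: "p > 0" and h: "\<forall>n\<ge>T. TM_seq a L k \<kappa> (N + n * l) = TM_seq a L k \<kappa> (N + (n + p) * l)"
      unfolding ult_periodic_def by blast
    have "\<forall>t\<ge>T. Ev \<kappa> k 0 (N + t*l) mod L = Ev \<kappa> k 0 (N + (t+p)*l) mod L"
      using h eqi by blast
    from key[OF assms(2) assms(1) l p this] show ?thesis .
  qed
  have 1: "ult_periodic (TM_seq a L k \<kappa>) \<longleftrightarrow> ?C"
  proof
    assume "ult_periodic (TM_seq a L k \<kappa>)"
    then have "ult_periodic (\<lambda>t. TM_seq a L k \<kappa> (0 + t * 1))" by simp
    from fwd[OF _ this] show ?C by simp
  next
    assume ?C then show "ult_periodic (TM_seq a L k \<kappa>)" by (rule bwd)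
  qed
  have 2: "\<not> ult_periodic (TM_seq a L k \<kappa>) \<longrightarrow>
           (\<forall>N l. l > 0 \<longrightarrow> \<not> ult_periodic (\<lambda>t. TM_seq a L k \<kappa> (N + t * l)))"
    using fwd bwd by blast
  from 1 2 show ?thesis by blast
qed
end
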